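(* Let $\chi,a,b,\lambda,\mu$ be positive constants with $b>2\chi\mu$. Consider the system \[ \begin{cases} \phi''-\chi(\phi\psi')'+\phi(a-b\phi)=0, & x\in\mathbb{R},\\ \psi''-\lambda\psi+\mu\phi=0, & x\in\mathbb{R}. \end{cases} \] Then $(\phi,\psi)\equiv\left(\frac{a}{b},\frac{a\mu}{b\lambda}\right)$ is the unique solution of this system with $\phi,\psi\in C^b_{\rm unif}(\mathbb{R})$ and $\inf_{x\in\mathbb{R}}\phi(x)>0$.
   Context: $C^b_{\rm unif}(\mathbb{R})$ denotes the space of bounded, uniformly continuous real functions on $\mathbb{R}$. *)

theory Defs
  imports "HOL-Analysis.Analysis"
begin

definition Cb_unif :: "(real \<Rightarrow> real) \<Rightarrow> bool" where
  "Cb_unif f \<longleftrightarrow> bounded (range f) \<and> uniformly_continuous_on UNIV f"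

text \<open>Classical (C^2) solution of
  phi'' - chi (phi psi')' + phi (a - b phi) = 0,  psi'' - lam psi + mu phi = 0  on R.
  The term (phi psi')' is written out by the product rule as phi' psi' + phi psi''.\<close>
definition classical_solution ::
  "real \<Rightarrow> real \<Rightarrow> real \<Rightarrow> real \<Rightarrow> real \<Rightarrow> (real \<Rightarrow> real) \<Rightarrow> (real \<Rightarrow> real) \<Rightarrow> bool" where
  "classical_solution chi a b lam mu phi psi \<longleftrightarrow>
     (\<exists>phi1 phi2 psi1 psi2.
        (\<forall>x. (phi has_real_derivative phi1 x) (at x)) \<and>
        (\<forall>x. (phi1 has_real_derivative phi2 x) (at x)) \<and>
        (\<forall>x. (psi has_real_derivative psi1 x) (at x)) \<and>
        (\<forall>x. (psi1 has_real_derivative psi2 x) (at x)) \<and>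
        continuous_on UNIV phi2 \<and> continuous_on UNIV psi2 \<and>
        (\<forall>x. phi2 x - chi * (phi1 x * psi1 x + phi x * psi2 x) + phi x * (a - b * phi x) = 0) \<and>
        (\<forall>x. psi2 x - lam * psi x + mu * phi x = 0))"

end

theory Submission
  imports Defs
begin

lemma approx_max:
  fixes u u1 u2 :: "real \<Rightarrow> real" and S e :: real
  assumes d1: "\<And>x. (u has_real_derivative u1 x) (at x)"
    and d2: "\<And>x. (u1 has_real_derivative u2 x) (at x)"
    and ub: "\<And>y. u y \<le> S" and e: "e > 0"
    and near: "\<And>\<eta>. \<eta> > 0 \<Longrightarrow> \<exists>x. S - \<eta> < u x"
  shows "\<exists>x. S - e \<le> u x \<and> \<bar>u1 x\<bar> \<le> e \<and> u2 x \<le> e"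
proof -
  obtain x0 where x0: "S - e/2 < u x0" using near[of "e/2"] e by auto
  define w where "w = (\<lambda>x. u x - e/2 * (x - x0)^2)"
  define w1 where "w1 = (\<lambda>x. u1 x - e * (x - x0))"
  have dw: "\<And>x. (w has_real_derivative w1 x) (at x)"
    unfolding w_def w1_def by (auto intro!: derivative_eq_intros d1)
  have dw1: "\<And>x. (w1 has_real_derivative (u2 x - e)) (at x)"
    unfolding w1_def by (auto intro!: derivative_eq_intros d2)
  have cont: "continuous_on {x0-1..x0+1} w"
    using dw by (meson DERIV_isCont continuous_at_imp_continuous_on)
  obtain x1 where x1: "x1 \<in> {x0-1..x0+1}" "\<forall>y\<in>{x0-1..x0+1}. w y \<le> w x1"
    using continuous_attains_sup[OF compact_Icc _ cont] by auto
  have wx0: "w x0 \<le> w x1" using x1 by auto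
  have glob: "w y \<le> w x1" for y
  proof (cases "y \<in> {x0-1..x0+1}")
    case True thus ?thesis using x1 by auto
  next
    case False
    then have "1 < \<bar>y - x0\<bar>" by auto
    then have "1 * 1 < \<bar>y - x0\<bar> * \<bar>y - x0\<bar>" by (intro mult_strict_mono) auto
    then have "1 < (y - x0)^2" by (simp add: power2_eq_square)
    then have "e/2 * 1 < e/2 * (y - x0)^2" using e by (intro mult_strict_left_mono) auto
    then have "w y < w x0" using ub[of y] x0 unfolding w_def by auto
    thus ?thesis using wx0 by auto
  qed
  have w1z: "w1 x1 = 0" using DERIV_local_max[OF dw[of x1], of 1] glob by auto
  have u2le: "u2 x1 \<le> e"
  proof (rule ccontr)
    assume "\<not> u2 x1 \<le> e"
    then have "0 < u2 x1 - e" by simp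
    from DERIV_pos_inc_right[OF dw1 this] obtain d where d: "d > 0"
      "\<forall>h>0. h < d \<longrightarrow> w1 x1 < w1 (x1 + h)" by auto
    obtain z where z: "x1 < z" "z < x1 + d/2" "w (x1 + d/2) - w x1 = (x1 + d/2 - x1) * w1 z"
      using MVT2[of x1 "x1 + d/2" w w1] dw d by auto
    have "z - x1 > 0" "z - x1 < d" using z d(1) by auto
    then have "w1 x1 < w1 (x1 + (z - x1))" using d(2) by blast
    then have "w1 z > 0" using w1z by simp
    then have "d * w1 z > 0" using d(1) by simp
    then have "w (x1 + d/2) > w x1" using z(3) by (simp add: algebra_simps)
    thus False using glob[of "x1 + d/2"] by simp
  qed
  have "\<bar>x1 - x0\<bar> \<le> 1" using x1 by auto
  then have "\<bar>u1 x1\<bar> \<le> e" using w1z e unfolding w1_def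
    by (simp add: abs_mult mult_left_le)
  moreover have "u x0 \<le> u x1"
  proof -
    have "0 \<le> e/2 * (x1 - x0)^2" using e by simp
    then show ?thesis using wx0 unfolding w_def by simp
  qed
  ultimately show ?thesis using x0 u2le by (intro exI[of _ x1]) auto
qed

lemma deriv_bound:
  fixes u u1 u2 :: "real \<Rightarrow> real" and M0 M2 :: real
  assumes d1: "\<And>x. (u has_real_derivative u1 x) (at x)"
    and d2: "\<And>x. (u1 has_real_derivative u2 x) (at x)"
    and b0: "\<And>y. \<bar>u y\<bar> \<le> M0" and b2: "\<And>y. \<bar>u2 y\<bar> \<le> M2"
  shows "\<bar>u1 x\<bar> \<le> 2 * M0 + M2"
proof -
  obtain z where z: "x < z" "z < x + 1" "u (x + 1) - u x = (x + 1 - x) * u1 z"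
    using MVT2[of x "x + 1" u u1] d1 by auto
  obtain t where t: "x < t" "t < z" "u1 z - u1 x = (z - x) * u2 t"
    using MVT2[of x z u1 u2] d2 z by auto
  have "\<bar>u1 z\<bar> \<le> 2 * M0" using z b0[of x] b0[of "x+1"] by auto
  moreover have "\<bar>(z - x) * u2 t\<bar> \<le> M2"
  proof -
    have "\<bar>(z - x) * u2 t\<bar> = \<bar>z - x\<bar> * \<bar>u2 t\<bar>" by (simp add: abs_mult)
    also have "\<dots> \<le> 1 * M2" using z b2[of t] by (intro mult_mono) auto
    finally show ?thesis by simp
  qed
  ultimately show ?thesis using t by linarith
qed

lemma le_eps:
  fixes x y C :: real
  assumes "C > 0" "\<And>e. e > 0 \<Longrightarrow> x \<le> y + C * e"
  shows "x \<le> y"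
proof (rule field_le_epsilon)
  fix e :: real assume "0 < e"
  then show "x \<le> y + e" using assms(2)[of "e / C"] assms(1) by auto
qed


theorem lemma2p2:
  fixes chi a b lam mu :: real
  assumes "chi > 0" "a > 0" "b > 0" "lam > 0" "mu > 0"
    and "b > 2 * chi * mu"
  shows "classical_solution chi a b lam mu (\<lambda>x. a / b) (\<lambda>x. a * mu / (b * lam))
         \<and> (\<forall>phi psi. classical_solution chi a b lam mu phi psi \<and> Cb_unif phi \<and> Cb_unif psi
               \<and> (INF x. phi x) > 0
             \<longrightarrow> phi = (\<lambda>x. a / b) \<and> psi = (\<lambda>x. a * mu / (b * lam)))"
proof (rule conjI)
  show "classical_solution chi a b lam mu (\<lambda>x. a / b) (\<lambda>x. a * mu / (b * lam))"
    unfolding classical_solution_def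
    using assms by (intro exI[of _ "\<lambda>x. 0"]) (auto simp: field_simps)
next
  show "\<forall>phi psi. classical_solution chi a b lam mu phi psi \<and> Cb_unif phi \<and> Cb_unif psi
               \<and> (INF x. phi x) > 0
             \<longrightarrow> phi = (\<lambda>x. a / b) \<and> psi = (\<lambda>x. a * mu / (b * lam))"
  proof (intro allI impI)
  fix phi psi
  assume H: "classical_solution chi a b lam mu phi psi \<and> Cb_unif phi \<and> Cb_unif psi
               \<and> (INF x. phi x) > 0"
  then obtain phi1 phi2 psi1 psi2 where
    dp1: "\<And>x. (phi has_real_derivative phi1 x) (at x)" and
    dp2: "\<And>x. (phi1 has_real_derivative phi2 x) (at x)" and
    ds1: "\<And>x. (psi has_real_derivative psi1 x) (at x)" and
    ds2: "\<And>x. (psi1 has_real_derivative psi2 x) (at x)" and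
    eq1: "\<And>x. phi2 x - chi * (phi1 x * psi1 x + phi x * psi2 x) + phi x * (a - b * phi x) = 0" and
    eq2: "\<And>x. psi2 x - lam * psi x + mu * phi x = 0"
    unfolding classical_solution_def by blast
  have bp: "bounded (range phi)" and bs: "bounded (range psi)"
    using H unfolding Cb_unif_def by auto
  define Phi where "Phi = Sup (range phi)"
  define m where "m = Inf (range phi)"
  define P where "P = Sup (range psi)"
  define q where "q = Inf (range psi)"
  have mpos: "m > 0" using H unfolding m_def by simp
  have phiU: "phi y \<le> Phi" for y
    unfolding Phi_def using bp by (auto intro!: cSup_upper bounded_imp_bdd_above)
  have phiL: "m \<le> phi y" for y
    unfolding m_def using bp by (auto intro!: cInf_lower bounded_imp_bdd_below)
  have psiU: "psi y \<le> P" for y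
    unfolding P_def using bs by (auto intro!: cSup_upper bounded_imp_bdd_above)
  have psiL: "q \<le> psi y" for y
    unfolding q_def using bs by (auto intro!: cInf_lower bounded_imp_bdd_below)
  have phiN: "\<exists>x. Phi - \<eta> < phi x" if "\<eta> > 0" for \<eta>
  proof -
    have "Phi - \<eta> < Phi" using that by simp
    moreover have "bdd_above (range phi)" using bp by (rule bounded_imp_bdd_above)
    ultimately show ?thesis using less_cSup_iff[of "range phi" "Phi - \<eta>"] unfolding Phi_def by auto
  qed
  have phiNm: "\<exists>x. phi x < m + \<eta>" if "\<eta> > 0" for \<eta>
  proof -
    have "m < m + \<eta>" using that by simp
    moreover have "bdd_below (range phi)" using bp by (rule bounded_imp_bdd_below)
    ultimately show ?thesis using cInf_less_iff[of "range phi" "m + \<eta>"] unfolding m_def by auto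
  qed
  have psiN: "\<exists>x. P - \<eta> < psi x" if "\<eta> > 0" for \<eta>
  proof -
    have "P - \<eta> < P" using that by simp
    moreover have "bdd_above (range psi)" using bs by (rule bounded_imp_bdd_above)
    ultimately show ?thesis using less_cSup_iff[of "range psi" "P - \<eta>"] unfolding P_def by auto
  qed
  have psiNm: "\<exists>x. psi x < q + \<eta>" if "\<eta> > 0" for \<eta>
  proof -
    have "q < q + \<eta>" using that by simp
    moreover have "bdd_below (range psi)" using bs by (rule bounded_imp_bdd_below)
    ultimately show ?thesis using cInf_less_iff[of "range psi" "q + \<eta>"] unfolding q_def by auto
  qed
  have dmp1: "\<And>x. ((\<lambda>x. - phi x) has_real_derivative - phi1 x) (at x)"
    using dp1 by (auto intro: DERIV_minus)
  have dmp2: "\<And>x. ((\<lambda>x. - phi1 x) has_real_derivative - phi2 x) (at x)"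
    using dp2 by (auto intro: DERIV_minus)
  have dms1: "\<And>x. ((\<lambda>x. - psi x) has_real_derivative - psi1 x) (at x)"
    using ds1 by (auto intro: DERIV_minus)
  have dms2: "\<And>x. ((\<lambda>x. - psi1 x) has_real_derivative - psi2 x) (at x)"
    using ds2 by (auto intro: DERIV_minus)
  have approx_min: "\<exists>x. u x \<le> mm + e \<and> \<bar>u1 x\<bar> \<le> e \<and> - e \<le> u2 x"
    if hh: "\<And>x. ((\<lambda>x. - u x) has_real_derivative - u1 x) (at x)"
       "\<And>x. ((\<lambda>x. - u1 x) has_real_derivative - u2 x) (at x)"
       "\<And>y. mm \<le> u y" "e > 0" "\<And>\<eta>. \<eta> > 0 \<Longrightarrow> \<exists>x. u x < mm + \<eta>"
     for u u1 u2 :: "real \<Rightarrow> real" and mm e :: real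
  proof -
    have nr: "\<exists>x. - mm - \<eta> < - u x" if eta: "\<eta> > 0" for \<eta>
    proof -
      obtain x where "u x < mm + \<eta>" using eta \<open>\<And>\<eta>. \<eta> > 0 \<Longrightarrow> \<exists>x. u x < mm + \<eta>\<close> by blast
      then show ?thesis by (intro exI[of _ x]) simp
    qed
    have ub': "\<And>y. - u y \<le> - mm" using hh(3) by simp
    obtain x where x: "- mm - e \<le> - u x" "\<bar>- u1 x\<bar> \<le> e" "- u2 x \<le> e"
      using approx_max[OF hh(1,2) ub' hh(4) nr] by blast
    then show ?thesis by (intro exI[of _ x]) simp
  qed
  obtain Mp where Mp: "\<And>y. \<bar>phi y\<bar> \<le> Mp"
    using bp unfolding bounded_iff by auto
  obtain Ms where Ms: "\<And>y. \<bar>psi y\<bar> \<le> Ms"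
    using bs unfolding bounded_iff by auto
  have b2: "\<bar>psi2 y\<bar> \<le> lam * Ms + mu * Mp" for y
  proof -
    have "psi2 y = lam * psi y - mu * phi y" using eq2[of y] by simp
    then have "\<bar>psi2 y\<bar> \<le> \<bar>lam * psi y\<bar> + \<bar>mu * phi y\<bar>" by simp
    also have "\<dots> = lam * \<bar>psi y\<bar> + mu * \<bar>phi y\<bar>" using assms by (simp add: abs_mult)
    also have "\<dots> \<le> lam * Ms + mu * Mp"
      using Mp[of y] Ms[of y] assms by (intro add_mono mult_left_mono) auto
    finally show ?thesis .
  qed
  define K where "K = 2 * Ms + (lam * Ms + mu * Mp)"
  have Kb: "\<bar>psi1 y\<bar> \<le> K" for y
    unfolding K_def by (rule deriv_bound[OF ds1 ds2 Ms b2])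
  have K0: "K \<ge> 0" using Kb[of 0] by simp
  have s1: "lam * P \<le> mu * Phi"
  proof (rule le_eps[of "1 + lam"])
    show "1 + lam > 0" using assms by simp
    fix e :: real assume e: "e > 0"
    obtain x where x: "P - e \<le> psi x" "psi2 x \<le> e"
      using approx_max[OF ds1 ds2 psiU e psiN] by auto
    have "lam * (P - e) \<le> lam * psi x" using x assms by (intro mult_left_mono) auto
    also have "\<dots> = psi2 x + mu * phi x" using eq2[of x] by simp
    also have "\<dots> \<le> e + mu * Phi" using x phiU[of x] assms by (intro add_mono mult_left_mono) auto
    finally show "lam * P \<le> mu * Phi + (1 + lam) * e" by (simp add: algebra_simps)
  qed
  have s2: "mu * m \<le> lam * q"
  proof (rule le_eps[of "1 + lam"])
    show "1 + lam > 0" using assms by simp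
    fix e :: real assume e: "e > 0"
    obtain x where x: "psi x \<le> q + e" "- e \<le> psi2 x"
      using approx_min[OF dms1 dms2 psiL e psiNm] by auto
    have "mu * m \<le> mu * phi x" using phiL[of x] assms by (intro mult_left_mono) auto
    then have "mu * m - e \<le> mu * phi x + psi2 x" using x by linarith

    also have "\<dots> = lam * psi x" using eq2[of x] by simp
    also have "\<dots> \<le> lam * (q + e)" using x assms by (intro mult_left_mono) auto
    finally show "mu * m \<le> lam * q + (1 + lam) * e" by (simp add: algebra_simps)
  qed
  have key: "phi x * (chi * lam * psi x + (b - chi * mu) * phi x - a) = phi2 x - chi * phi1 x * psi1 x" for x
  proof -
    have h: "psi2 x = lam * psi x - mu * phi x" using eq2[of x] by simp
    show ?thesis using eq1[of x] unfolding h by (simp add: algebra_simps)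
  qed
  have "chi * mu > 0" using assms by simp
  then have bcm: "b - chi * mu > 0" using assms by linarith
  define C where "C = (1 + chi * K) / m + (b - chi * mu)"
  have Cpos: "C > 0" unfolding C_def using mpos K0 assms bcm by (auto intro!: add_nonneg_pos)
  have prodb: "\<bar>chi * phi1 x * psi1 x\<bar> \<le> chi * K * e" if "\<bar>phi1 x\<bar> \<le> e" for x e
  proof -
    have "\<bar>chi * phi1 x * psi1 x\<bar> = chi * (\<bar>phi1 x\<bar> * \<bar>psi1 x\<bar>)" using assms by (simp add: abs_mult)
    also have "\<dots> \<le> chi * (e * K)" using that Kb[of x] assms by (intro mult_left_mono mult_mono) auto
    finally show ?thesis by (simp add: algebra_simps)
  qed
  have s3: "(b - chi * mu) * Phi + chi * mu * m - a \<le> 0"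
  proof (rule le_eps[OF Cpos])
    fix e :: real assume e: "e > 0"
    obtain x where x: "Phi - e \<le> phi x" "\<bar>phi1 x\<bar> \<le> e" "phi2 x \<le> e"
      using approx_max[OF dp1 dp2 phiU e phiN] by auto
    define T where "T = chi * lam * psi x + (b - chi * mu) * phi x - a"
    have pT: "phi x * T \<le> e * (1 + chi * K)"
    proof -
      have k: "phi x * T = phi2 x - chi * phi1 x * psi1 x" unfolding T_def by (rule key)
      have "\<bar>chi * phi1 x * psi1 x\<bar> \<le> chi * K * e" by (rule prodb[OF x(2)])
      then have "- (chi * K * e) \<le> chi * phi1 x * psi1 x \<and> chi * phi1 x * psi1 x \<le> chi * K * e" by (simp add: abs_le_iff)
      moreover have "e * (1 + chi * K) = e + chi * K * e" by (simp add: algebra_simps)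
      ultimately show ?thesis using k x by linarith
    qed
    have Tb: "T \<le> e * (1 + chi * K) / m"
    proof (cases "T \<le> 0")
      case True
      have "0 \<le> e * (1 + chi * K) / m" using e K0 mpos assms by (intro divide_nonneg_pos mult_nonneg_nonneg) auto
      with True show ?thesis by linarith
    next
      case False
      then have "m * T \<le> phi x * T" using phiL[of x] by (intro mult_right_mono) auto
      then have "m * T \<le> e * (1 + chi * K)" using pT by simp
      thus ?thesis using mpos by (simp add: field_simps)
    qed
    have "mu * m \<le> lam * psi x" using s2 psiL[of x] assms
      by (meson dual_order.trans less_eq_real_def mult_left_mono)
    then have "chi * (mu * m) \<le> chi * (lam * psi x)" using assms by (intro mult_left_mono) auto
    then have "chi * mu * m \<le> chi * lam * psi x" by (simp add: mult.assoc)

    moreover have "(b - chi * mu) * (Phi - e) \<le> (b - chi * mu) * phi x"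
      using x bcm by (intro mult_left_mono) auto
    ultimately have "(b - chi * mu) * Phi + chi * mu * m - a \<le> T + (b - chi * mu) * e"
      unfolding T_def by (simp add: algebra_simps)
    also have "\<dots> \<le> e * (1 + chi * K) / m + (b - chi * mu) * e" using Tb by simp
    also have "\<dots> = 0 + C * e" unfolding C_def by (simp add: algebra_simps)
    finally show "(b - chi * mu) * Phi + chi * mu * m - a \<le> 0 + C * e" .
  qed
  have s4: "a - chi * mu * Phi - (b - chi * mu) * m \<le> 0"
  proof (rule le_eps[OF Cpos])
    fix e :: real assume e: "e > 0"
    obtain x where x: "phi x \<le> m + e" "\<bar>phi1 x\<bar> \<le> e" "- e \<le> phi2 x"
      using approx_min[OF dmp1 dmp2 phiL e phiNm] by auto
    define T where "T = chi * lam * psi x + (b - chi * mu) * phi x - a"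
    have pT: "- (e * (1 + chi * K)) \<le> phi x * T"
    proof -
      have k: "phi x * T = phi2 x - chi * phi1 x * psi1 x" unfolding T_def by (rule key)
      have "\<bar>chi * phi1 x * psi1 x\<bar> \<le> chi * K * e" by (rule prodb[OF x(2)])
      then have "- (chi * K * e) \<le> chi * phi1 x * psi1 x \<and> chi * phi1 x * psi1 x \<le> chi * K * e" by (simp add: abs_le_iff)
      moreover have "e * (1 + chi * K) = e + chi * K * e" by (simp add: algebra_simps)
      ultimately show ?thesis using k x by linarith
    qed
    have Tb: "- T \<le> e * (1 + chi * K) / m"
    proof (cases "T \<ge> 0")
      case True
      have "0 \<le> e * (1 + chi * K) / m" using e K0 mpos assms by (intro divide_nonneg_pos mult_nonneg_nonneg) auto
      with True show ?thesis by linarith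
    next
      case False
      then have "m * (- T) \<le> phi x * (- T)" using phiL[of x] by (intro mult_right_mono) auto
      then have "m * (- T) \<le> e * (1 + chi * K)" using pT by simp
      thus ?thesis using mpos by (simp add: field_simps)
    qed
    have "lam * psi x \<le> mu * Phi" using s1 psiU[of x] assms
      by (meson dual_order.trans less_eq_real_def mult_left_mono)
    then have "chi * (lam * psi x) \<le> chi * (mu * Phi)" using assms by (intro mult_left_mono) auto
    then have "chi * lam * psi x \<le> chi * mu * Phi" by (simp add: mult.assoc)

    moreover have "(b - chi * mu) * phi x \<le> (b - chi * mu) * (m + e)"
      using x bcm by (intro mult_left_mono) auto
    ultimately have "a - chi * mu * Phi - (b - chi * mu) * m \<le> - T + (b - chi * mu) * e"
      unfolding T_def by (simp add: algebra_simps)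
    also have "\<dots> \<le> e * (1 + chi * K) / m + (b - chi * mu) * e" using Tb by simp
    also have "\<dots> = 0 + C * e" unfolding C_def by (simp add: algebra_simps)
    finally show "a - chi * mu * Phi - (b - chi * mu) * m \<le> 0 + C * e" .
  qed
  have "(b - 2 * chi * mu) * (Phi - m) \<le> 0" using s3 s4 by (simp add: algebra_simps)
  then have "Phi - m \<le> 0" using assms by (simp add: mult_le_0_iff)
  moreover have "m \<le> Phi" using phiL[of 0] phiU[of 0] by simp
  ultimately have PhiM: "Phi = m" by simp
  have "b * m = a" using s3 s4 PhiM by (simp add: algebra_simps)
  then have mab: "m = a / b" using assms by (simp add: field_simps)
  have phic: "phi = (\<lambda>x. a / b)"
  proof
    fix y show "phi y = a / b" using phiL[of y] phiU[of y] PhiM mab by simp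
  qed
  have "lam * P \<le> lam * q" using s1 s2 PhiM by simp
  then have "P \<le> q" using assms by simp
  moreover have "q \<le> P" using psiL[of 0] psiU[of 0] by simp
  ultimately have "P = q" by simp
  then have "lam * P = mu * m" using s1 s2 PhiM by simp
  then have "P = a * mu / (b * lam)" using mab assms by (simp add: field_simps)
  then have psic: "psi = (\<lambda>x. a * mu / (b * lam))"
  proof -
    assume "P = a * mu / (b * lam)"
    then show ?thesis using psiL psiU \<open>P = q\<close> by (intro ext antisym) auto
  qed
  show "phi = (\<lambda>x. a / b) \<and> psi = (\<lambda>x. a * mu / (b * lam))" using phic psic by simp
  qed
qed

end
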